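(* Every palindrome that is a factor of $\Lambda_\theta$ contains at most three distinct letters.
   Context: Fix an irrational $\theta$ with $1<\theta<2$. Let $S(\theta)=\{i+j\theta : i,j\in\mathbb{N}_0\}$ and let $s_0<s_1<s_2<\cdots$ be its elements in increasing order. Put $\delta(n)=s_{n+1}-s_n$. Let $\lambda$ be the map from the set of values $\{\delta(n):n\ge0\}$ to $\mathbb{N}_0$ that numbers the distinct values in order of first occurrence: $\lambda(\delta(0))=0$, and the $m$-th distinct value to appear in the sequence $\delta(0),\delta(1),\dots$ (counting from $m=0$) receives label $m$. The Lambda word is the right-infinite word $\Lambda_\theta=\lambda(\delta(0))\lambda(\delta(1))\lambda(\delta(2))\cdots$ over the alphabet $\mathbb{N}_0$. A factor is a finite block of consecutive letters; a palindrome is a finite word equal to its reversal. *)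

theory Defs
  imports Complex_Main
begin

definition Sset :: "real \<Rightarrow> real set" where
  "Sset \<theta> = {real i + real j * \<theta> | i j. True}"

definition s_seq :: "real \<Rightarrow> nat \<Rightarrow> real" where
  "s_seq \<theta> n = (THE x. x \<in> Sset \<theta> \<and> card {y \<in> Sset \<theta>. y < x} = n)"

definition delta :: "real \<Rightarrow> nat \<Rightarrow> real" where
  "delta \<theta> n = s_seq \<theta> (Suc n) - s_seq \<theta> n"

text \<open>Label of a gap value by order of first occurrence: the label of delta(n) is the
  number of distinct values occurring strictly before the first occurrence of delta(n).\<close>
definition Lambda_word :: "real \<Rightarrow> nat \<Rightarrow> nat" where
  "Lambda_word \<theta> n =
     card (delta \<theta> ` {..< (LEAST k. delta \<theta> k = delta \<theta> n)})"

definition is_factor :: "'a list \<Rightarrow> (nat \<Rightarrow> 'a) \<Rightarrow> bool" where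
  "is_factor u w \<longleftrightarrow> (\<exists>i. u = map w [i..<i + length u])"

definition palindrome :: "'a list \<Rightarrow> bool" where
  "palindrome u \<longleftrightarrow> rev u = u"

end

theory Submission
  imports Defs
begin

definition eps :: "real \<Rightarrow> nat \<Rightarrow> real" where
  "eps t m = real_of_int \<lceil>real m * t\<rceil> - real m * t"
definition eta :: "real \<Rightarrow> nat \<Rightarrow> real" where
  "eta t m = real m * t - real_of_int \<lfloor>real m * t\<rfloor>"

lemma irr_int:
  assumes "t \<notin> \<rat>" "real_of_int p = real_of_int q * t"
  shows "q = 0"
proof (rule ccontr)
  assume "q \<noteq> 0"
  then have "t = real_of_int p / real_of_int q" using assms(2) by (simp add: field_simps)
  then have "t \<in> \<rat>" by (simp add: Rats_divide)
  then show False using assms(1) by simp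
qed

lemma not_int_mult:
  assumes "t \<notin> \<rat>" "1 \<le> m"
  shows "real_of_int \<lfloor>real m * t\<rfloor> \<noteq> real m * t"
proof
  assume h: "real_of_int \<lfloor>real m * t\<rfloor> = real m * t"
  have "int m = 0" using irr_int[OF assms(1), of "\<lfloor>real m * t\<rfloor>" "int m"] h by simp
  then show False using assms(2) by simp
qed

lemma eps_eta_sum: assumes "t \<notin> \<rat>" "1 \<le> m" shows "eps t m + eta t m = 1"
proof -
  have "\<lceil>real m * t\<rceil> = \<lfloor>real m * t\<rfloor> + 1"
    using not_int_mult[OF assms] by (metis ceiling_altdef of_int_floor_cancel)
  then show ?thesis unfolding eps_def eta_def by simp
qed

lemma eta_pos: assumes "t \<notin> \<rat>" "1 \<le> m" shows "0 < eta t m"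
  using not_int_mult[OF assms] of_int_floor_le[of "real m * t"] unfolding eta_def by linarith

lemma eta_lt1: assumes "t \<notin> \<rat>" "1 \<le> m" shows "eta t m < 1"
  unfolding eta_def using real_of_int_floor_add_one_gt[of "real m * t"] by linarith

lemma eps_pos: assumes "t \<notin> \<rat>" "1 \<le> m" shows "0 < eps t m"
  using eps_eta_sum[OF assms] eta_lt1[OF assms] by linarith

lemma eps_lt1: assumes "t \<notin> \<rat>" "1 \<le> m" shows "eps t m < 1"
  using eps_eta_sum[OF assms] eta_pos[OF assms] by linarith

lemma eps_le: assumes "real_of_int a - real m * t > 0" shows "eps t m \<le> real_of_int a - real m * t"
proof -
  have "\<lceil>real m * t\<rceil> \<le> a" using assms by (simp add: ceiling_le_iff)
  then show ?thesis unfolding eps_def by simp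
qed

lemma eta_le: assumes "real m * t - real_of_int a > 0" shows "eta t m \<le> real m * t - real_of_int a"
proof -
  have "a \<le> \<lfloor>real m * t\<rfloor>" using assms by (simp add: le_floor_iff)
  then show ?thesis unfolding eta_def by simp
qed

lemma L1: "eps t m1 - eta t m2 > 0 \<Longrightarrow> eps t (m1+m2) \<le> eps t m1 - eta t m2"
  using eps_le[of "\<lceil>real m1 * t\<rceil> + \<lfloor>real m2 * t\<rfloor>" "m1+m2" t]
  unfolding eps_def eta_def by (simp add: algebra_simps)

lemma L2: "eta t m1 - eps t m2 > 0 \<Longrightarrow> eta t (m1+m2) \<le> eta t m1 - eps t m2"
  using eta_le[of "m1+m2" t "\<lfloor>real m1 * t\<rfloor> + \<lceil>real m2 * t\<rceil>"]
  unfolding eps_def eta_def by (simp add: algebra_simps)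

lemma L3: "m < mA \<Longrightarrow> eps t m - eps t mA > 0 \<Longrightarrow> eta t (mA - m) \<le> eps t m - eps t mA"
  using eta_le[of "mA - m" t "\<lceil>real mA * t\<rceil> - \<lceil>real m * t\<rceil>"]
  unfolding eps_def eta_def by (simp add: algebra_simps of_nat_diff)

lemma L4: "m < mB \<Longrightarrow> eta t m - eta t mB > 0 \<Longrightarrow> eps t (mB - m) \<le> eta t m - eta t mB"
  using eps_le[of "\<lfloor>real mB * t\<rfloor> - \<lfloor>real m * t\<rfloor>" "mB - m" t]
  unfolding eps_def eta_def by (simp add: algebra_simps of_nat_diff)

lemma L5: "mB < mA \<Longrightarrow> eps t mA + eta t mB > 0 \<Longrightarrow> eps t (mA - mB) \<le> eps t mA + eta t mB"
  using eps_le[of "\<lceil>real mA * t\<rceil> - \<lfloor>real mB * t\<rfloor>" "mA - mB" t]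
  unfolding eps_def eta_def by (simp add: algebra_simps of_nat_diff)

lemma L6: "mA < mB \<Longrightarrow> eps t mA + eta t mB > 0 \<Longrightarrow> eta t (mB - mA) \<le> eps t mA + eta t mB"
  using eta_le[of "mB - mA" t "\<lfloor>real mB * t\<rfloor> - \<lceil>real mA * t\<rceil>"]
  unfolding eps_def eta_def by (simp add: algebra_simps of_nat_diff)

lemma eps_inj: assumes "t \<notin> \<rat>" "eps t m = eps t m'" shows "m = m'"
proof -
  have "real_of_int (\<lceil>real m * t\<rceil> - \<lceil>real m' * t\<rceil>) = real_of_int (int m - int m') * t"
    using assms(2) unfolding eps_def by (simp add: algebra_simps)
  then have "int m - int m' = 0" using irr_int[OF assms(1)] by blast
  then show ?thesis by simp
qed

lemma eta_inj: assumes "t \<notin> \<rat>" "eta t m = eta t m'" shows "m = m'"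
proof -
  have "real_of_int (\<lfloor>real m * t\<rfloor> - \<lfloor>real m' * t\<rfloor>) = real_of_int (int m - int m') * t"
    using assms(2) unfolding eta_def by (simp add: algebra_simps)
  then have "int m - int m' = 0" using irr_int[OF assms(1)] by blast
  then show ?thesis by simp
qed


lemma three_gap:
  fixes t g :: real and b d mA mB :: nat
  assumes irr: "t \<notin> \<rat>" and bd: "b \<le> d"
    and mA: "1 \<le> mA" "mA \<le> d" "\<forall>m. 1 \<le> m \<longrightarrow> m \<le> d \<longrightarrow> eps t mA \<le> eps t m"
    and mB: "1 \<le> mB" "mB \<le> d" "\<forall>m. 1 \<le> m \<longrightarrow> m \<le> d \<longrightarrow> eta t mB \<le> eta t m"
    and ga: "g \<le> 1"
    and gb: "\<forall>m. 1 \<le> m \<longrightarrow> m \<le> b \<longrightarrow> g \<le> eps t m"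
    and gc: "\<forall>m. 1 \<le> m \<longrightarrow> m \<le> d - b \<longrightarrow> g \<le> eta t m"
    and gd: "1 \<le> g \<or> (\<exists>m. 1 \<le> m \<and> m \<le> b \<and> eps t m \<le> g)
               \<or> (\<exists>m. 1 \<le> m \<and> m \<le> d - b \<and> eta t m \<le> g)"
  shows "g = eps t mA \<or> g = eta t mB \<or> g = min 1 (eps t mA + eta t mB)"
proof -
  have epA: "0 < eps t mA" "eps t mA < 1" using eps_pos[OF irr mA(1)] eps_lt1[OF irr mA(1)] by auto
  have etB: "0 < eta t mB" "eta t mB < 1" using eta_pos[OF irr mB(1)] eta_lt1[OF irr mB(1)] by auto
  consider (c1) "mA \<le> b" | (c2) "b < mA" "mB \<le> d - b" | (c3) "b < mA" "d - b < mB" by linarith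
  then show ?thesis
  proof cases
    case c1
    have up: "g \<le> eps t mA" using gb c1 mA(1) by blast
    have "eps t mA \<le> g" using gd
    proof (elim disjE exE conjE)
      assume "1 \<le> g" then show ?thesis using up epA by linarith
    next
      fix m assume "1 \<le> m" "m \<le> b" "eps t m \<le> g"
      then show ?thesis using mA(3) bd by fastforce
    next
      fix m assume m: "1 \<le> m" "m \<le> d - b" "eta t m \<le> g"
      have "eps t mA \<le> eta t m"
      proof (rule ccontr)
        assume "\<not> ?thesis"
        then have "eps t (mA + m) \<le> eps t mA - eta t m" using L1 by force
        moreover have "eps t mA \<le> eps t (mA + m)" using mA(3) m c1 bd by force
        ultimately show False using eta_pos[OF irr m(1)] by linarith
      qed
      then show ?thesis using m by linarith
    qed
    then show ?thesis using up by linarith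
  next
    case c2
    have up: "g \<le> eta t mB" using gc c2 mB(1) by blast
    have "eta t mB \<le> g" using gd
    proof (elim disjE exE conjE)
      assume "1 \<le> g" then show ?thesis using up etB by linarith
    next
      fix m assume m: "1 \<le> m" "m \<le> b" "eps t m \<le> g"
      have "eta t mB \<le> eps t m"
      proof (rule ccontr)
        assume "\<not> ?thesis"
        then have "eta t (mB + m) \<le> eta t mB - eps t m" using L2 by force
        moreover have "eta t mB \<le> eta t (mB + m)" using mB(3) m c2 bd by force
        ultimately show False using eps_pos[OF irr m(1)] by linarith
      qed
      then show ?thesis using m by linarith
    next
      fix m assume "1 \<le> m" "m \<le> d - b" "eta t m \<le> g"
      then show ?thesis using mB(3) bd by fastforce
    qed
    then show ?thesis using up by linarith
  next
    case c3
    have up: "g \<le> eps t mA + eta t mB"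
    proof (cases mA mB rule: linorder_cases)
      case less
      then have "eta t (mB - mA) \<le> eps t mA + eta t mB" using L6 epA etB by force
      moreover have "g \<le> eta t (mB - mA)" using gc less c3 mA mB by force
      ultimately show ?thesis by linarith
    next
      case equal
      then show ?thesis using ga eps_eta_sum[OF irr mA(1)] by simp
    next
      case greater
      then have "eps t (mA - mB) \<le> eps t mA + eta t mB" using L5 epA etB by force
      moreover have "g \<le> eps t (mA - mB)" using gb greater c3 mB mA by force
      ultimately show ?thesis by linarith
    qed
    have lo: "min 1 (eps t mA + eta t mB) \<le> g" using gd
    proof (elim disjE exE conjE)
      assume "1 \<le> g" then show ?thesis by linarith
    next
      fix m assume m: "1 \<le> m" "m \<le> b" "eps t m \<le> g"
      have ne: "eps t m \<noteq> eps t mA" using eps_inj[OF irr] m c3 by force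
      have "eps t mA \<le> eps t m" using mA(3) m bd by force
      then have gt: "eps t m - eps t mA > 0" using ne by linarith
      have "eta t (mA - m) \<le> eps t m - eps t mA" using L3[OF _ gt] m c3 by linarith
      moreover have "eta t mB \<le> eta t (mA - m)" using mB(3) m c3 mA by force
      ultimately show ?thesis using m by linarith
    next
      fix m assume m: "1 \<le> m" "m \<le> d - b" "eta t m \<le> g"
      have ne: "eta t m \<noteq> eta t mB" using eta_inj[OF irr] m c3 by force
      have "eta t mB \<le> eta t m" using mB(3) m bd by force
      then have gt: "eta t m - eta t mB > 0" using ne by linarith
      have "eps t (mB - m) \<le> eta t m - eta t mB" using L4[OF _ gt] m c3 by linarith
      moreover have "eps t mA \<le> eps t (mB - m)" using mA(3) m c3 mB by force
      ultimately show ?thesis using m by linarith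
    qed
    show ?thesis using up lo ga by linarith
  qed
qed


lemma S_mem: "real i + real j * t \<in> Sset t" by (auto simp: Sset_def)

lemma S_E: "x \<in> Sset t \<Longrightarrow> \<exists>i j. x = real i + real j * t" by (auto simp: Sset_def)

lemma S_nonneg: "0 < t \<Longrightarrow> x \<in> Sset t \<Longrightarrow> 0 \<le> x" by (auto simp: Sset_def)

lemma fin_below: assumes "1 < t" shows "finite {y \<in> Sset t. y < x}"
proof -
  let ?N = "nat \<lceil>x\<rceil>"
  have "{y \<in> Sset t. y < x} \<subseteq> (\<lambda>(i,j). real i + real j * t) ` ({..?N} \<times> {..?N})"
  proof
    fix y assume "y \<in> {y \<in> Sset t. y < x}"
    then obtain i j where y: "y = real i + real j * t" "y < x" by (auto simp: Sset_def)
    have "real j \<le> real j * t" using assms by (simp add: mult_le_cancel_left1)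
    then have "real i < x" "real j < x" using y assms by (auto intro: add_nonneg_nonneg)
    then have "i \<le> ?N" "j \<le> ?N" by linarith+
    then show "y \<in> (\<lambda>(i,j). real i + real j * t) ` ({..?N} \<times> {..?N})" using y by force
  qed
  then show ?thesis by (rule finite_subset) auto
qed

definition cnt where "cnt t x = card {y \<in> Sset t. y < x}"

lemma cnt_mono: "1 < t \<Longrightarrow> x \<le> x' \<Longrightarrow> cnt t x \<le> cnt t x'"
  unfolding cnt_def by (rule card_mono[OF fin_below]) auto

lemma cnt_strict: "1 < t \<Longrightarrow> x \<in> Sset t \<Longrightarrow> x < x' \<Longrightarrow> cnt t x < cnt t x'"
  unfolding cnt_def by (rule psubset_card_mono[OF fin_below]) auto

lemma cnt_exists: assumes "1 < t" shows "\<exists>x\<in>Sset t. cnt t x = n"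
proof (induction n)
  case 0
  have z: "(0::real) \<in> Sset t" using S_mem[of 0 0 t] by simp
  have e: "{y \<in> Sset t. y < 0} = {}" using S_nonneg[of t] assms by force
  show ?case unfolding cnt_def by (rule bexI[of _ 0]) (simp only: e card.empty, fact z)
next
  case (Suc n)
  then obtain x where x: "x \<in> Sset t" "cnt t x = n" by blast
  let ?A = "{y \<in> Sset t. x < y \<and> y \<le> x + 1}"
  have finA: "finite ?A" by (rule finite_subset[OF _ fin_below[OF assms, of "x+2"]]) auto
  obtain i j where xij: "x = real i + real j * t" using S_E[OF x(1)] by blast
  have "x + 1 \<in> ?A" using S_mem[of "i+1" j t] xij by (simp add: algebra_simps)
  then have neA: "?A \<noteq> {}" by blast
  let ?x' = "Min ?A"
  have x'A: "?x' \<in> ?A" using Min_in[OF finA neA] .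
  have x'min: "\<And>y. y \<in> ?A \<Longrightarrow> ?x' \<le> y" using Min_le[OF finA] by blast
  have eq: "{y \<in> Sset t. y < ?x'} = insert x {y \<in> Sset t. y < x}"
  proof (rule set_eqI, rule iffI)
    fix y assume y: "y \<in> {y \<in> Sset t. y < ?x'}"
    show "y \<in> insert x {y \<in> Sset t. y < x}"
    proof (rule ccontr)
      assume "y \<notin> insert x {y \<in> Sset t. y < x}"
      then have "x < y" using y by auto
      moreover have "y \<le> x + 1" using y x'A by auto
      ultimately have "y \<in> ?A" using y by auto
      then show False using x'min y by force
    qed
  next
    fix y assume "y \<in> insert x {y \<in> Sset t. y < x}"
    then show "y \<in> {y \<in> Sset t. y < ?x'}" using x'A x(1) by auto
  qed
  have "cnt t ?x' = Suc n" unfolding cnt_def eq using fin_below[OF assms] x(2)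
    by (simp add: cnt_def)
  then show ?case using x'A by blast
qed

lemma s_props: assumes "1 < t" shows "s_seq t n \<in> Sset t \<and> cnt t (s_seq t n) = n"
proof -
  have ex1: "\<exists>!x. x \<in> Sset t \<and> card {y \<in> Sset t. y < x} = n"
  proof -
    obtain x where x: "x \<in> Sset t" "cnt t x = n" using cnt_exists[OF assms] by blast
    show ?thesis
    proof (rule ex1I[of _ x])
      show "x \<in> Sset t \<and> card {y \<in> Sset t. y < x} = n" using x unfolding cnt_def by simp
    next
      fix x' assume x': "x' \<in> Sset t \<and> card {y \<in> Sset t. y < x'} = n"
      show "x' = x"
      proof (rule ccontr)
        assume "x' \<noteq> x"
        then consider "x' < x" | "x < x'" by linarith
        then show False
          using cnt_strict[OF assms, of x' x] cnt_strict[OF assms, of x x'] x x'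
          unfolding cnt_def by force+
      qed
    qed
  qed
  show ?thesis using theI'[OF ex1] unfolding s_seq_def cnt_def by blast
qed

lemma s_in: "1 < t \<Longrightarrow> s_seq t n \<in> Sset t" using s_props by blast

lemma s_next: assumes "1 < t" "y \<in> Sset t" "s_seq t n < y" shows "s_seq t (Suc n) \<le> y"
proof (rule ccontr)
  assume "\<not> ?thesis"
  then have "y < s_seq t (Suc n)" by simp
  then have "cnt t y < Suc n" using cnt_strict[OF assms(1) assms(2)] s_props[OF assms(1)] by metis
  moreover have "n < cnt t y" using cnt_strict[OF assms(1) s_in[OF assms(1)] assms(3)]
      s_props[OF assms(1)] by metis
  ultimately show False by simp
qed

lemma s_inc: assumes "1 < t" shows "s_seq t n < s_seq t (Suc n)"
proof (rule ccontr)
  assume "\<not> ?thesis"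
  then have "cnt t (s_seq t (Suc n)) \<le> cnt t (s_seq t n)" using cnt_mono[OF assms] by simp
  then show False using s_props[OF assms] by simp
qed

lemma s_prev: assumes "1 < t" "y \<in> Sset t" "y < s_seq t (Suc n)" shows "y \<le> s_seq t n"
  using s_next[OF assms(1,2), of n] assms(3) by linarith


lemma irr_eq:
  fixes a b c d :: nat
  assumes "t \<notin> \<rat>" "real a + real b * t = real c + real d * t"
  shows "a = c \<and> b = d"
proof -
  have "real_of_int (int a - int c) = real_of_int (int d - int b) * t"
    using assms(2) by (simp add: algebra_simps)
  then have "int d - int b = 0" using irr_int[OF assms(1)] by blast
  then have "b = d" by simp
  then show ?thesis using assms(2) by simp
qed

lemma exists_argmin:
  fixes f :: "nat \<Rightarrow> real"
  assumes "1 \<le> d"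
  shows "\<exists>x. 1 \<le> x \<and> x \<le> d \<and> (\<forall>m. 1 \<le> m \<longrightarrow> m \<le> d \<longrightarrow> f x \<le> f m)"
proof -
  have fin: "finite (f ` {1..d})" by simp
  have ne: "f ` {1..d} \<noteq> {}" using assms by auto
  obtain x where x: "x \<in> {1..d}" "f x = Min (f ` {1..d})" using Min_in[OF fin ne] by auto
  show ?thesis using x Min_le[OF fin] by (intro exI[of _ x]) auto
qed

lemma delta_step: "s_seq t (Suc n) = s_seq t n + delta t n" unfolding delta_def by simp

lemma window_gaps:
  assumes irr: "t \<notin> \<rat>" and t1: "1 < t"
    and pal: "\<forall>k<L. delta t (i+k) = delta t (i + (L - 1 - k))"
  shows "\<exists>V. finite V \<and> card V \<le> 3 \<and> delta t ` {i..<i+L} \<subseteq> V"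
proof -
  define s where "s = s_seq t"
  define \<sigma> where "\<sigma> = s i + s (i+L)"
  have sym: "k \<le> L \<Longrightarrow> s (i+k) + s (i+(L-k)) = \<sigma>" for k
  proof (induction k)
    case 0 then show ?case unfolding \<sigma>_def by simp
  next
    case (Suc k)
    have e1: "s (i + Suc k) = s (i+k) + delta t (i+k)" unfolding s_def using delta_step by simp
    have "i + (L - k) = Suc (i + (L - Suc k))" using Suc.prems by simp
    then have e2: "s (i + (L-k)) = s (i + (L - Suc k)) + delta t (i + (L - Suc k))"
      unfolding s_def using delta_step by simp
    have e3: "delta t (i+k) = delta t (i + (L - Suc k))" using pal Suc.prems
      by (metis Suc_le_lessD diff_Suc_eq_diff_pred diff_commute)
    show ?case using Suc e1 e2 e3 by simp
  qed
  obtain a0 b0 where ab0: "s i = real a0 + real b0 * t" using S_E[OF s_in[OF t1]] unfolding s_def by blast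
  obtain a1 b1 where ab1: "s (i+L) = real a1 + real b1 * t" using S_E[OF s_in[OF t1]] unfolding s_def by blast
  define c where "c = a0 + a1"
  define d where "d = b0 + b1"
  have \<sigma>cd: "\<sigma> = real c + real d * t" unfolding \<sigma>_def c_def d_def ab0 ab1 by (simp add: algebra_simps)
  have coord: "\<exists>a b. s (i+k) = real a + real b * t \<and> b \<le> d \<and> a \<le> c \<and>
      s (i+(L-k)) = real (c - a) + real (d - b) * t" if k: "k \<le> L" for k
  proof -
    obtain a b where ab: "s (i+k) = real a + real b * t" using S_E[OF s_in[OF t1]] unfolding s_def by blast
    obtain a' b' where ab': "s (i+(L-k)) = real a' + real b' * t" using S_E[OF s_in[OF t1]] unfolding s_def by blast
    have "real (a+a') + real (b+b') * t = real c + real d * t"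
      using sym[OF k] ab ab' \<sigma>cd by (simp add: algebra_simps)
    then have "a + a' = c \<and> b + b' = d" using irr_eq[OF irr] by blast
    then show ?thesis using ab ab' by (intro exI[of _ a] exI[of _ b]) auto
  qed
  have gapfacts: "delta t (i+k) \<le> 1 \<and>
      (\<forall>m. 1 \<le> m \<longrightarrow> m \<le> b \<longrightarrow> delta t (i+k) \<le> eps t m) \<and>
      (\<forall>m. 1 \<le> m \<longrightarrow> m \<le> d - b \<longrightarrow> delta t (i+k) \<le> eta t m) \<and>
      (1 \<le> delta t (i+k) \<or> (\<exists>m. 1 \<le> m \<and> m \<le> b \<and> eps t m \<le> delta t (i+k))
               \<or> (\<exists>m. 1 \<le> m \<and> m \<le> d - b \<and> eta t m \<le> delta t (i+k)))"
    if k: "k < L" and ab: "s (i+k) = real a + real b * t" "b \<le> d" "a \<le> c"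
      "s (i+(L-k)) = real (c - a) + real (d - b) * t" for k a b
  proof -
    define n where "n = i + k"
    have gdef: "delta t n = s (Suc n) - s n" unfolding s_def delta_def by simp
    have sn: "s n = real a + real b * t" using ab unfolding n_def by simp
    obtain a' b' where ab': "s (i + Suc k) = real a' + real b' * t" "b' \<le> d"
      using coord[of "Suc k"] k by auto
    have sn1: "s (Suc n) = real a' + real b' * t" using ab' unfolding n_def by simp
    have inc: "s n < s (Suc n)" unfolding s_def using s_inc[OF t1] by simp
    have A: "delta t n \<le> 1"
    proof -
      have "s (Suc n) \<le> real (a+1) + real b * t"
        unfolding s_def by (rule s_next[OF t1 S_mem]) (use sn in \<open>simp add: s_def\<close>)
      then show ?thesis using gdef sn by simp
    qed
    have B: "delta t n \<le> eps t m" if m: "1 \<le> m" "m \<le> b" for m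
    proof -
      have nn: "real (nat \<lceil>real m * t\<rceil>) = real_of_int \<lceil>real m * t\<rceil>"
        using t1 by (simp add: ceiling_le_iff) 
      have y: "real (a + nat \<lceil>real m * t\<rceil>) + real (b - m) * t = s n + eps t m"
        using m nn unfolding sn eps_def by (simp add: of_nat_diff algebra_simps)
      have "s (Suc n) \<le> real (a + nat \<lceil>real m * t\<rceil>) + real (b - m) * t"
        unfolding s_def by (rule s_next[OF t1 S_mem])
          (use y eps_pos[OF irr m(1)] in \<open>simp add: s_def\<close>)
      then show ?thesis using gdef y by simp
    qed
    have C: "delta t n \<le> eta t m" if m: "1 \<le> m" "m \<le> d - b" for m
    proof -
      define n' where "n' = i + (L - Suc k)"
      have sn': "Suc n' = i + (L - k)" unfolding n'_def using k by simp
      have e1: "s (Suc n') = real (c - a) + real (d - b) * t" using sn' ab(4) by simp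
      have e2: "s n' = \<sigma> - s (Suc n)" using sym[of "Suc k"] k unfolding n'_def n_def by simp
      have e3: "s (Suc n') = \<sigma> - s n" using sym[of k] k sn' unfolding n_def by simp
      have nn: "real (nat \<lfloor>real m * t\<rfloor>) = real_of_int \<lfloor>real m * t\<rfloor>"
        using t1 by simp
      have y: "real (c - a + nat \<lfloor>real m * t\<rfloor>) + real (d - b - m) * t = s (Suc n') - eta t m"
        using m nn ab(3) unfolding e1 eta_def by (simp add: of_nat_diff algebra_simps)
      have "real (c - a + nat \<lfloor>real m * t\<rfloor>) + real (d - b - m) * t \<le> s n'"
        unfolding s_def by (rule s_prev[OF t1 S_mem])
          (use y eta_pos[OF irr m(1)] in \<open>simp add: s_def\<close>)
      then show ?thesis using gdef y e2 e3 by simp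
    qed
    have D: "1 \<le> delta t n \<or> (\<exists>m. 1 \<le> m \<and> m \<le> b \<and> eps t m \<le> delta t n)
               \<or> (\<exists>m. 1 \<le> m \<and> m \<le> d - b \<and> eta t m \<le> delta t n)"
    proof -
      have g: "delta t n = (real a' - real a) + (real b' - real b) * t"
        using gdef sn sn1 by (simp add: algebra_simps)
      have gpos: "delta t n > 0" using gdef inc by simp
      consider "b' = b" | "b' < b" | "b < b'" by linarith
      then show ?thesis
      proof cases
        case 1
        then have "real a < real a'" using g gpos by simp
        then have "a + 1 \<le> a'" by simp
        then have "real a + 1 \<le> real a'" by (metis of_nat_1 of_nat_add of_nat_le_iff)
        then show ?thesis using g 1 by simp
      next
        case 2
        have "delta t n = real_of_int (int a' - int a) - real (b - b') * t"
          using g 2 by (simp add: of_nat_diff algebra_simps)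
        then have "eps t (b - b') \<le> delta t n" using eps_le[of "int a' - int a" "b - b'" t] gpos by simp
        then show ?thesis using 2 by (intro disjI2 disjI1 exI[of _ "b - b'"]) auto
      next
        case 3
        have "delta t n = real (b' - b) * t - real_of_int (int a - int a')"
          using g 3 by (simp add: of_nat_diff algebra_simps)
        then have "eta t (b' - b) \<le> delta t n" using eta_le[of "b' - b" t "int a - int a'"] gpos by simp
        then show ?thesis using 3 ab'(2) by (intro disjI2 disjI2 exI[of _ "b' - b"]) auto
      qed
    qed
    show ?thesis using A B C D unfolding n_def by blast
  qed
  show ?thesis
  proof (cases "d = 0")
    case True
    have "delta t ` {i..<i+L} \<subseteq> {1}"
    proof
      fix x assume "x \<in> delta t ` {i..<i+L}"
      then obtain n where n: "n \<in> {i..<i+L}" "x = delta t n" by blast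
      define k where "k = n - i"
      have k: "k < L" "x = delta t (i+k)" using n unfolding k_def by auto
      obtain a b where ab: "s (i+k) = real a + real b * t" "b \<le> d" "a \<le> c"
        "s (i+(L-k)) = real (c - a) + real (d - b) * t" using coord[of k] k by auto
      have "b = 0" using ab True by simp
      then show "x \<in> {1}" using gapfacts[OF k(1) ab] True k by auto
    qed
    then show ?thesis by (intro exI[of _ "{1}"]) auto
  next
    case False
    then have d1: "1 \<le> d" by simp
    obtain mA where mA: "1 \<le> mA" "mA \<le> d" "\<forall>m. 1 \<le> m \<longrightarrow> m \<le> d \<longrightarrow> eps t mA \<le> eps t m"
      using exists_argmin[OF d1, of "eps t"] by blast
    obtain mB where mB: "1 \<le> mB" "mB \<le> d" "\<forall>m. 1 \<le> m \<longrightarrow> m \<le> d \<longrightarrow> eta t mB \<le> eta t m"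
      using exists_argmin[OF d1, of "eta t"] by blast
    let ?V = "{eps t mA, eta t mB, min 1 (eps t mA + eta t mB)}"
    have "delta t ` {i..<i+L} \<subseteq> ?V"
    proof
      fix x assume "x \<in> delta t ` {i..<i+L}"
      then obtain n where n: "n \<in> {i..<i+L}" "x = delta t n" by blast
      define k where "k = n - i"
      have k: "k < L" "x = delta t (i+k)" using n unfolding k_def by auto
      obtain a b where ab: "s (i+k) = real a + real b * t" "b \<le> d" "a \<le> c"
        "s (i+(L-k)) = real (c - a) + real (d - b) * t" using coord[of k] k by auto
      have "x = eps t mA \<or> x = eta t mB \<or> x = min 1 (eps t mA + eta t mB)"
        unfolding k(2) using gapfacts[OF k(1) ab]
        by (intro three_gap[OF irr ab(2) mA mB]) auto
      then show "x \<in> ?V" by auto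
    qed
    moreover have "card ?V \<le> 3" by (simp add: card_insert_le_m1)
    ultimately show ?thesis by (intro exI[of _ ?V]) auto
  qed
qed


lemma label_inj:
  assumes "Lambda_word t n = Lambda_word t m" shows "delta t n = delta t m"
proof (rule ccontr)
  assume ne: "delta t n \<noteq> delta t m"
  define F where "F x = (LEAST k. delta t k = delta t x)" for x
  have FF: "delta t (F x) = delta t x" for x unfolding F_def by (rule LeastI) (rule refl)
  have Fle: "delta t k = delta t x \<Longrightarrow> F x \<le> k" for k x unfolding F_def by (rule Least_le)
  have lt: "card (delta t ` {..< F x}) < card (delta t ` {..< F y})" if xy: "F x < F y" for x y
  proof -
    have nin: "delta t (F x) \<notin> delta t ` {..< F x}"
    proof
      assume "delta t (F x) \<in> delta t ` {..< F x}"
      then obtain k where "k < F x" "delta t k = delta t x" using FF by force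
      then show False using Fle by fastforce
    qed
    have "insert (delta t (F x)) (delta t ` {..< F x}) \<subseteq> delta t ` {..< F y}" using xy by auto
    then have "card (insert (delta t (F x)) (delta t ` {..< F x})) \<le> card (delta t ` {..< F y})"
      by (intro card_mono) auto
    then show ?thesis using nin by simp
  qed
  have LW: "Lambda_word t x = card (delta t ` {..< F x})" for x unfolding Lambda_word_def F_def by simp
  have "F n \<noteq> F m" using FF ne by metis
  then consider "F n < F m" | "F m < F n" by linarith
  then show False using lt[of n m] lt[of m n] assms unfolding LW by cases auto
qed

theorem corollary6:
  fixes \<theta> :: real and u :: "nat list"
  assumes "\<theta> \<notin> \<rat>" and "1 < \<theta>" and "\<theta> < 2"
    and "is_factor u (Lambda_word \<theta>)" and "palindrome u"
  shows "card (set u) \<le> 3"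
proof -
  define L where "L = length u"
  obtain i where u: "u = map (Lambda_word \<theta>) [i..<i + L]"
    using assms(4) unfolding is_factor_def L_def by blast
  have nth: "k < L \<Longrightarrow> u ! k = Lambda_word \<theta> (i + k)" for k
    using u by simp
  have palL: "Lambda_word \<theta> (i+k) = Lambda_word \<theta> (i + (L - 1 - k))" if k: "k < L" for k
  proof -
    have "rev u ! k = u ! (L - Suc k)" using k rev_nth[of k u] unfolding L_def by simp
    then have "u ! k = u ! (L - Suc k)" using assms(5) unfolding palindrome_def by simp
    then show ?thesis using nth[OF k] nth[of "L - Suc k"] k by simp
  qed
  have pal: "\<forall>k<L. delta \<theta> (i+k) = delta \<theta> (i + (L - 1 - k))"
    using palL label_inj by blast
  obtain V where V: "finite V" "card V \<le> 3" "delta \<theta> ` {i..<i+L} \<subseteq> V"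
    using window_gaps[OF assms(1,2) pal] by blast
  define G where "G v = card (delta \<theta> ` {..< (LEAST k. delta \<theta> k = v)})" for v
  have LG: "Lambda_word \<theta> n = G (delta \<theta> n)" for n unfolding Lambda_word_def G_def by simp
  have "set u = G ` (delta \<theta> ` {i..<i+L})" unfolding u by (auto simp: LG)
  then have "card (set u) \<le> card (delta \<theta> ` {i..<i+L})" by (simp add: card_image_le)
  also have "\<dots> \<le> card V" using V by (intro card_mono) auto
  finally show ?thesis using V by simp
qed

end
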